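(* Let $\mathbb K$ be a field and $\alpha,\beta\in\mathbb K^\times$. Let $A=A_{\alpha,\beta}$ be the graded $\mathbb K$-algebra generated by the six degree-one elements $Y=\{a,b,c,x,y,z\}$ subject to the $26$ relations $$bY\cup Ya\cup\{x,y,z\}^2\cup\{a(x+y-z),\ (x-y)b,\ (x-z)b,\ xc-\alpha cx,\ yc-\beta cy,\ zc-cz\}$$ (here $bY=\{bu\mid u\in Y\}$, $Ya=\{ua\mid u\in Y\}$, $\{x,y,z\}^2$ is the set of the nine products of two of $x,y,z$). Then for every $n\ge0$ $$h_A(n+3)=\begin{cases}11,&\alpha^n+\beta^n=1,\\10,&\alpha^n+\beta^n\ne1.\end{cases}$$ In particular, the equation $\alpha^n+\beta^n=1$ has no solution with $\alpha,\beta\in\mathbb K^\times$ for any $n\ge3$ if and only if $h_{A_{\alpha,\beta}}(i)=10$ for all $i\ge6$ and all $\alpha,\beta\in\mathbb K^\times$.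
   Context: $h_A(n)=\dim A_n$. *)

theory Defs
  imports Complex_Main "HOL-Library.Function_Algebras"
begin

datatype gen = Ga | Gb | Gc | Gx | Gy | Gz

text \<open>Noncommutative polynomials over a field 'k are coefficient functions on words
  (lists of generators). Scalar multiplication is pointwise.\<close>
definition scaleF :: "'k::field \<Rightarrow> (gen list \<Rightarrow> 'k) \<Rightarrow> (gen list \<Rightarrow> 'k)" where
  "scaleF c f = (\<lambda>w. c * f w)"

lemma vector_space_scaleF: "vector_space (scaleF :: 'k::field \<Rightarrow> _)"
  unfolding vector_space_def scaleF_def by (auto simp: fun_eq_iff algebra_simps)

definition poly_of :: "('k::field \<times> gen list) list \<Rightarrow> (gen list \<Rightarrow> 'k)" where
  "poly_of ts = (\<lambda>w. sum_list (map (\<lambda>(c, m). if w = m then c else 0) ts))"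

definition wrap :: "gen list \<Rightarrow> gen list \<Rightarrow> ('k::field \<times> gen list) list \<Rightarrow> (gen list \<Rightarrow> 'k)" where
  "wrap u v ts = poly_of (map (\<lambda>(c, m). (c, u @ m @ v)) ts)"

definition allgens :: "gen list" where
  "allgens = [Ga, Gb, Gc, Gx, Gy, Gz]"

definition rels :: "'k::field \<Rightarrow> 'k \<Rightarrow> ('k \<times> gen list) list set" where
  "rels \<alpha> \<beta> =
     {[(1, [Gb, u])] | u. u \<in> set allgens}
   \<union> {[(1, [u, Ga])] | u. u \<in> set allgens}
   \<union> {[(1, [u, v])] | u v. u \<in> {Gx, Gy, Gz} \<and> v \<in> {Gx, Gy, Gz}}
   \<union> {[(1, [Ga, Gx]), (1, [Ga, Gy]), (-1, [Ga, Gz])],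
      [(1, [Gx, Gb]), (-1, [Gy, Gb])],
      [(1, [Gx, Gb]), (-1, [Gz, Gb])],
      [(1, [Gx, Gc]), (-\<alpha>, [Gc, Gx])],
      [(1, [Gy, Gc]), (-\<beta>, [Gc, Gy])],
      [(1, [Gz, Gc]), (-1, [Gc, Gz])]}"

text \<open>Spanning set of the degree-n part I_n of the two-sided ideal generated by the relations.\<close>
definition idealgens :: "'k::field \<Rightarrow> 'k \<Rightarrow> nat \<Rightarrow> (gen list \<Rightarrow> 'k) set" where
  "idealgens \<alpha> \<beta> n = {wrap u v r | u v r. r \<in> rels \<alpha> \<beta> \<and> length u + length v + 2 = n}"

text \<open>Hilbert function: dim A_n = dim (free algebra)_n - dim I_n = 6^n - dim I_n.\<close>
definition hA :: "'k::field \<Rightarrow> 'k \<Rightarrow> nat \<Rightarrow> nat" where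
  "hA \<alpha> \<beta> n = 6 ^ n - vector_space.dim (scaleF :: 'k \<Rightarrow> _) (idealgens \<alpha> \<beta> n)"

end

theory Submission
  imports Defs
begin

interpretation V: vector_space "scaleF :: 'k::field \<Rightarrow> (gen list \<Rightarrow> 'k) \<Rightarrow> _"
  by (rule vector_space_scaleF)

definition E :: "gen list \<Rightarrow> gen list \<Rightarrow> 'k::field" where
  "E w = (\<lambda>t. if t = w then 1 else 0)"

lemma scaleF_apply[simp]: "scaleF c f t = c * f t" by (simp add: scaleF_def)

lemma sum_fun_apply: "(sum f A) t = sum (\<lambda>x. f x t) A"
  by (induct A rule: infinite_finite_induct) auto

lemma dim_main:
  fixes I :: "(gen list \<Rightarrow> 'k::field) set" and W N :: "gen list set"
    and nf :: "gen list \<Rightarrow> gen list \<Rightarrow> 'k"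
  assumes finW: "finite W" and NW: "N \<subseteq> W"
   and supp: "\<And>g t. g \<in> I \<Longrightarrow> t \<notin> W \<Longrightarrow> g t = 0"
   and kill: "\<And>g. g \<in> I \<Longrightarrow> (\<Sum>w\<in>W. scaleF (g w) (nf w)) = 0"
   and red: "\<And>w. w \<in> W \<Longrightarrow> E w - nf w \<in> V.span I"
   and nfN: "\<And>t. t \<in> N \<Longrightarrow> nf t = E t"
   and nfsupp: "\<And>w t. w \<in> W \<Longrightarrow> t \<notin> N \<Longrightarrow> nf w t = 0"
  shows "V.dim I = card W - card N"
proof -
  define h where "h w = E w - nf w" for w
  define J where "J = h ` (W - N)"
  have hval: "h w t = (if t = w then 1 else 0)" if "w \<in> W" "t \<notin> N" for w t
    using nfsupp[OF that] by (simp add: h_def E_def)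
  have inj: "inj_on h (W - N)"
  proof (rule inj_onI)
    fix w w' assume a: "w \<in> W - N" "w' \<in> W - N" "h w = h w'"
    have 1: "h w w = 1" using hval[of w w] a by simp
    have 2: "h w' w = (if w = w' then 1 else 0)" using hval[of w' w] a by simp
    show "w = w'" using 1 2 a(3) by (auto split: if_splits)
  qed
  have finJ: "finite J" using finW by (simp add: J_def)
  have indep: "V.independent J"
  proof (rule V.independent_if_scalars_zero[OF finJ])
    fix f x assume s: "(\<Sum>x\<in>J. scaleF (f x) x) = 0" and x: "x \<in> J"
    then obtain w0 where w0: "w0 \<in> W - N" "x = h w0" by (auto simp: J_def)
    have "(\<Sum>x\<in>J. scaleF (f x) x) = (\<Sum>w\<in>W - N. scaleF (f (h w)) (h w))"
      unfolding J_def by (rule sum.reindex_cong[OF inj]) auto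
    then have "0 = (\<Sum>w\<in>W - N. scaleF (f (h w)) (h w)) w0" using s by simp
    also have "\<dots> = (\<Sum>w\<in>W - N. f (h w) * (if w0 = w then 1 else 0))"
      unfolding sum_fun_apply using w0 hval by (intro sum.cong) auto
    also have "\<dots> = f (h w0)" using w0 finW by (simp add: if_distrib cong: if_cong)
    finally show "f x = 0" using w0 by simp
  qed
  have "V.span J = V.span I"
  proof (subst V.span_eq, intro conjI subsetI)
    fix x assume "x \<in> J" then show "x \<in> V.span I" using red by (auto simp: J_def h_def)
  next
    fix g assume g: "g \<in> I"
    have "g = (\<Sum>w\<in>W. scaleF (g w) (E w))"
    proof
      fix t show "g t = (\<Sum>w\<in>W. scaleF (g w) (E w)) t"
        unfolding sum_fun_apply using supp[OF g, of t] finW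
        by (cases "t \<in> W") (auto simp: E_def if_distrib cong: if_cong)
    qed
    also have "\<dots> = (\<Sum>w\<in>W. scaleF (g w) (E w)) - (\<Sum>w\<in>W. scaleF (g w) (nf w))"
      using kill[OF g] by simp
    also have "\<dots> = (\<Sum>w\<in>W. scaleF (g w) (h w))"
      by (simp add: h_def V.scale_right_diff_distrib sum_subtractf)
    also have "\<dots> = (\<Sum>w\<in>W - N. scaleF (g w) (h w))"
      using finW NW nfN by (intro sum.mono_neutral_right) (auto simp: h_def)
    also have "\<dots> \<in> V.span J"
      by (intro V.span_sum V.span_scale V.span_base) (auto simp: J_def)
    finally show "g \<in> V.span J" .
  qed
  then have "V.dim I = V.dim J" by (metis V.dim_span)
  also have "\<dots> = card J" by (rule V.dim_eq_card_independent[OF indep])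
  also have "\<dots> = card (W - N)" unfolding J_def by (rule card_image[OF inj])
  also have "\<dots> = card W - card N" using NW finW by (meson card_Diff_subset finite_subset)
  finally show ?thesis .
qed

datatype st = C bool nat | U bool nat gen | En bool nat bool | Dead

fun nxt :: "st \<Rightarrow> gen \<Rightarrow> st" where
  "nxt (C p k) g = (if g = Ga then (if \<not> p \<and> k = 0 then C True 0 else Dead)
      else if g = Gb then En p k False else if g = Gc then C p (Suc k) else U p k g)"
| "nxt (U p k u) g = (if g = Gc then U p (Suc k) u else if g = Gb then En p k True else Dead)"
| "nxt (En p k h) g = Dead"
| "nxt Dead g = Dead"

definition pre :: "bool \<Rightarrow> gen list" where "pre p = (if p then [Ga] else [])"

fun rep :: "st \<Rightarrow> gen list" where
  "rep (C p k) = pre p @ replicate k Gc"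
| "rep (U p k u) = pre p @ replicate k Gc @ [u]"
| "rep (En p k h) = pre p @ replicate k Gc @ (if h then [Gx, Gb] else [Gb])"
| "rep Dead = []"

fun wfs :: "st \<Rightarrow> bool" where
  "wfs (U p k u) = (u \<noteq> Ga \<and> u \<noteq> Gb \<and> u \<noteq> Gc)" | "wfs _ = True"

fun strun :: "st \<Rightarrow> gen list \<Rightarrow> st" where
  "strun q [] = q" | "strun q (g # w) = strun (nxt q g) w"

lemma wfs_nxt: "wfs q \<Longrightarrow> wfs (nxt q g)"
  by (cases q) auto

lemma strun_Dead: "strun Dead w = Dead"
  by (induct w) auto

lemma strun_snoc: "strun q (u @ [g]) = nxt (strun q u) g"
  by (induct u arbitrary: q) auto

lemma wfs_strun: "wfs q \<Longrightarrow> wfs (strun q w)"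
  by (induct w arbitrary: q) (auto simp: wfs_nxt)

lemma len_rep_nxt: "nxt q g \<noteq> Dead \<Longrightarrow> length (rep (nxt q g)) = Suc (length (rep q))"
  by (cases q) (auto simp: pre_def split: if_splits)

lemma len_rep_strun: "strun q w \<noteq> Dead \<Longrightarrow> length (rep (strun q w)) = length (rep q) + length w"
proof (induct w arbitrary: q)
  case (Cons g w)
  then have "nxt q g \<noteq> Dead" using strun_Dead by fastforce
  with Cons show ?case by (simp add: len_rep_nxt)
qed simp

lemma gen_in_allgens: "g \<in> set allgens"
  by (cases g) (auto simp: allgens_def)

context fixes \<alpha> \<beta> :: "'k::field" begin

definition lam :: "gen \<Rightarrow> 'k" where "lam u = (if u = Gx then \<alpha> else if u = Gy then \<beta> else 1)"

fun wgt :: "st \<Rightarrow> gen \<Rightarrow> 'k" where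
  "wgt (U p k u) g = (if g = Gc then lam u else 1)" | "wgt _ g = 1"

fun wtrun :: "st \<Rightarrow> gen list \<Rightarrow> 'k" where
  "wtrun q [] = 1" | "wtrun q (g # w) = wgt q g * wtrun (nxt q g) w"

fun final :: "st \<Rightarrow> gen list \<Rightarrow> 'k" where
  "final (C p k) = E (rep (C p k))"
| "final (U p k u) = (if p \<and> u = Gz then scaleF (\<alpha>^k) (E (Ga # replicate k Gc @ [Gx]))
      + scaleF (\<beta>^k) (E (Ga # replicate k Gc @ [Gy])) else E (rep (U p k u)))"
| "final (En p k h) = (if p \<and> h \<and> \<alpha>^k + \<beta>^k \<noteq> 1 then 0 else E (rep (En p k h)))"
| "final Dead = 0"

fun ev :: "st \<Rightarrow> gen list \<Rightarrow> gen list \<Rightarrow> 'k" where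
  "ev q [] = final q" | "ev q (g # w) = scaleF (wgt q g) (ev (nxt q g) w)"

lemma ev_Dead: "ev Dead w t = 0"
  by (induct w) auto

lemma ev_En: "ev (En p k h) (g # v) t = 0"
  by (simp add: ev_Dead)

lemma ev_U_comb: "\<alpha>^k * ev (U True k Gx) v t + \<beta>^k * ev (U True k Gy) v t - ev (U True k Gz) v t = 0"
proof (induct v arbitrary: k)
  case Nil
  then show ?case by (simp add: pre_def)
next
  case (Cons g v)
  show ?case
  proof (cases g)
    case Gc
    with Cons[of "Suc k"] show ?thesis by (simp add: lam_def algebra_simps)
  next
    case Gb
    then show ?thesis
    proof (cases v)
      case Nil
      then show ?thesis using Gb by (auto simp flip: distrib_right)
    next
      case (Cons g' v')
      then show ?thesis using Gb by (simp add: ev_Dead)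
    qed
  qed (simp_all add: ev_Dead)
qed

lemma kill0: "r \<in> rels \<alpha> \<beta> \<Longrightarrow> sum_list (map (\<lambda>(c,m). c * ev q (m @ v) t) r) = 0"
  unfolding rels_def allgens_def
  apply (cases q)
  using ev_U_comb[of 0 v t]
  by (auto simp: ev_Dead lam_def algebra_simps)

lemma kill_rel: "r \<in> rels \<alpha> \<beta> \<Longrightarrow> sum_list (map (\<lambda>(c,m). c * ev q (u @ m @ v) t) r) = 0"
proof (induct u arbitrary: q)
  case Nil
  then show ?case using kill0 by simp
next
  case (Cons g u)
  have "map (\<lambda>(c,m). c * ev q ((g # u) @ m @ v) t) r
      = map (\<lambda>x. wgt q g * (\<lambda>(c,m). c * ev (nxt q g) (u @ m @ v) t) x) r"
    by (auto simp: algebra_simps)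
  then show ?case using Cons by (simp only: sum_list_const_mult) simp
qed

lemma rel_len: "r \<in> rels \<alpha> \<beta> \<Longrightarrow> (c, m) \<in> set r \<Longrightarrow> length m = 2"
  by (auto simp: rels_def allgens_def)

end

lemma poly_sum: "finite W \<Longrightarrow> (\<forall>(c,m)\<in>set ts. m \<in> W) \<Longrightarrow>
   (\<Sum>w\<in>W. poly_of ts w * F w) = sum_list (map (\<lambda>(c,m). c * F m) ts)"
proof (induct ts)
  case Nil
  then show ?case by (simp add: poly_of_def)
next
  case (Cons x ts)
  obtain c m where x: "x = (c, m)" by fastforce
  have "(\<Sum>w\<in>W. poly_of (x # ts) w * F w)
     = (\<Sum>w\<in>W. (if w = m then c * F m else 0)) + (\<Sum>w\<in>W. poly_of ts w * F w)"
    by (auto simp add: poly_of_def x sum.distrib[symmetric] distrib_right intro!: sum.cong)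
  also have "\<dots> = c * F m + sum_list (map (\<lambda>(c,m). c * F m) ts)"
    using Cons by (simp add: x)
  finally show ?case by (simp add: x)
qed

lemma sum_list_zeroI: "(\<forall>x\<in>set xs. f x = 0) \<Longrightarrow> sum_list (map f xs) = (0::'a::monoid_add)"
  by (induct xs) auto

lemma UNIV_gen: "(UNIV :: gen set) = set allgens"
  using gen_in_allgens by auto

lemma finite_gen[simp]: "finite (UNIV :: gen set)"
  by (simp add: UNIV_gen)

lemma card_gen: "card (UNIV :: gen set) = 6"
  by (simp add: UNIV_gen allgens_def)

lemma finite_W: "finite {w :: gen list. length w = m}"
  using finite_lists_length_eq[OF finite_gen, of m] by simp

lemma card_W: "card {w :: gen list. length w = m} = 6 ^ m"
  using card_lists_length_eq[OF finite_gen, of m] by (simp add: card_gen)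

context fixes \<alpha> \<beta> :: "'k::field" begin

lemma kill_gen:
  assumes "g \<in> idealgens \<alpha> \<beta> m"
  shows "(\<Sum>w\<in>{w. length w = m}. scaleF (g w) (ev \<alpha> \<beta> (C False 0) w)) = 0"
proof
  fix t
  from assms obtain u v r where g: "g = wrap u v r" and r: "r \<in> rels \<alpha> \<beta>"
    and len: "length u + length v + 2 = m"
    by (auto simp: idealgens_def)
  have "(\<Sum>w\<in>{w. length w = m}. scaleF (g w) (ev \<alpha> \<beta> (C False 0) w)) t
     = (\<Sum>w\<in>{w. length w = m}. poly_of (map (\<lambda>(c, m). (c, u @ m @ v)) r) w * ev \<alpha> \<beta> (C False 0) w t)"
    by (simp add: sum_fun_apply g wrap_def)
  also have "\<dots> = sum_list (map (\<lambda>(c,m). c * ev \<alpha> \<beta> (C False 0) m t) (map (\<lambda>(c, m). (c, u @ m @ v)) r))"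
    using rel_len[OF r] len by (intro poly_sum finite_W) auto
  also have "\<dots> = sum_list (map (\<lambda>(c,m). c * ev \<alpha> \<beta> (C False 0) (u @ m @ v) t) r)"
    by (simp add: case_prod_unfold o_def)
  also have "\<dots> = 0" by (rule kill_rel[OF r])
  finally show "(\<Sum>w\<in>{w. length w = m}. scaleF (g w) (ev \<alpha> \<beta> (C False 0) w)) t = 0 t" by simp
qed

lemma supp_gen:
  assumes "g \<in> idealgens \<alpha> \<beta> m" "length t \<noteq> m"
  shows "g t = 0"
proof -
  from assms obtain u v r where g: "g = wrap u v r" and r: "r \<in> rels \<alpha> \<beta>"
    and len: "length u + length v + 2 = m"
    by (auto simp: idealgens_def)
  have "\<forall>x\<in>set r. (case x of (c, m) \<Rightarrow> if t = u @ m @ v then c else 0) = 0"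
    using rel_len[OF r] len assms(2) by auto
  then show ?thesis unfolding g wrap_def poly_of_def
    by (simp add: o_def case_prod_unfold, intro sum_list_zeroI) auto
qed

end

lemma scaleF_one[simp]: "scaleF 1 f = f" by (simp add: scaleF_def)
lemma scaleF_zero[simp]: "scaleF c 0 = 0" by (simp add: scaleF_def fun_eq_iff)

lemma scaleF_neg1[simp]: "scaleF (-1) f = - f" by (simp add: scaleF_def fun_eq_iff)

lemma alg1: "X - scaleF (l * l ^ j) Z = (X + scaleF (-l) Y) + scaleF l (Y - scaleF (l ^ j) Z)"
  by (simp add: fun_eq_iff scaleF_def algebra_simps)

lemma alg2: "X - scaleF l Y = X + scaleF (-l) (Y :: gen list \<Rightarrow> 'k::field)"
  by (simp add: fun_eq_iff scaleF_def)

lemma alg3: "X - Y = - (Y + scaleF (-1) (X :: gen list \<Rightarrow> 'k::field))"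
  by (simp add: fun_eq_iff scaleF_def)

lemma scaleF_inv: "c \<noteq> 0 \<Longrightarrow> scaleF (inverse c) (scaleF c X) = X"
  by (simp add: scaleF_def fun_eq_iff)

lemma alg4: "Z' - scaleF a X' - scaleF b Y' = (X - scaleF a X') + (Y - scaleF b Y') - (Z - scaleF 1 Z') - (X + Y - Z)"
  for X :: "gen list \<Rightarrow> 'k::field"
  by (simp add: fun_eq_iff scaleF_def)

lemma alg5: "scaleF (1 - a - b) X = (X + scaleF (-1) Z) + (Z - scaleF a X - scaleF b Y) - scaleF b (X + scaleF (-1) Y)"
  for X :: "gen list \<Rightarrow> 'k::field"
  by (simp add: fun_eq_iff scaleF_def algebra_simps)

lemma alg6: "A - scaleF (w * s) B = (A - scaleF w D) + scaleF w (D - scaleF s B)"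
  for A :: "gen list \<Rightarrow> 'k::field"
  by (simp add: fun_eq_iff scaleF_def algebra_simps)

lemma alg7: "A - scaleF w B = (A - scaleF w D) + scaleF w (D - B)"
  for A :: "gen list \<Rightarrow> 'k::field"
  by (simp add: fun_eq_iff scaleF_def algebra_simps)

lemma wrap1: "wrap u v [(c,m)] = scaleF c (E (u @ m @ v))"
  by (simp add: fun_eq_iff wrap_def poly_of_def E_def)
lemma wrap2: "wrap u v [(c,m), (d, m')] = scaleF c (E (u @ m @ v)) + scaleF d (E (u @ m' @ v))"
  by (simp add: fun_eq_iff wrap_def poly_of_def E_def)
lemma wrap3: "wrap u v [(c,m), (d, m'), (e, m'')] =
   scaleF c (E (u @ m @ v)) + scaleF d (E (u @ m' @ v)) + scaleF e (E (u @ m'' @ v))"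
  by (simp add: fun_eq_iff wrap_def poly_of_def E_def)

context fixes \<alpha> \<beta> :: "'k::field" begin

definition GG :: "(gen list \<Rightarrow> 'k) set" where "GG = V.span (\<Union>n. idealgens \<alpha> \<beta> n)"

lemma gen_GG: "r \<in> rels \<alpha> \<beta> \<Longrightarrow> wrap u v r \<in> GG"
  unfolding GG_def idealgens_def
  by (rule V.span_base, rule UN_I[of "length u + length v + 2"]) blast+

lemma gen1: "[(1,m)] \<in> rels \<alpha> \<beta> \<Longrightarrow> E (u @ m @ v) \<in> GG"
  using gen_GG[of "[(1,m)]" u v] by (simp add: wrap1)

lemma gen2: "[(1,m), (c,m')] \<in> rels \<alpha> \<beta> \<Longrightarrow> E (u @ m @ v) + scaleF c (E (u @ m' @ v)) \<in> GG"
  using gen_GG[of "[(1,m), (c,m')]" u v] by (simp only: wrap2 scaleF_one)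

lemma gen3: "[(1,m), (1,m'), (-1,m'')] \<in> rels \<alpha> \<beta> \<Longrightarrow>
   E (u @ m @ v) + E (u @ m' @ v) - E (u @ m'' @ v) \<in> GG"
  using gen_GG[of "[(1,m), (1,m'), (-1, m'')]" u v] by (simp only: wrap3 scaleF_one scaleF_neg1 diff_conv_add_uminus)

lemma GG_add: "x \<in> GG \<Longrightarrow> y \<in> GG \<Longrightarrow> x + y \<in> GG"
  unfolding GG_def by (rule V.span_add)
lemma GG_diff: "x \<in> GG \<Longrightarrow> y \<in> GG \<Longrightarrow> x - y \<in> GG"
  unfolding GG_def by (rule V.span_diff)
lemma GG_scale: "x \<in> GG \<Longrightarrow> scaleF c x \<in> GG"
  unfolding GG_def by (rule V.span_scale)
lemma GG_neg: "x \<in> GG \<Longrightarrow> - x \<in> GG"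
  unfolding GG_def by (rule V.span_neg)
lemma GG_zero: "0 \<in> GG"
  unfolding GG_def by (rule V.span_zero)

lemma rel_comm: "u \<in> {Gx, Gy, Gz} \<Longrightarrow> [(1,[u,Gc]), (- lam \<alpha> \<beta> u, [Gc,u])] \<in> rels \<alpha> \<beta>"
  by (auto simp: rels_def lam_def)

lemma comm:
  assumes u: "u \<in> {Gx, Gy, Gz}"
  shows "E (P @ [u] @ replicate j Gc @ S) - scaleF (lam \<alpha> \<beta> u ^ j) (E (P @ replicate j Gc @ [u] @ S)) \<in> GG"
proof (induct j arbitrary: P)
  case 0
  then show ?case using GG_zero by (simp add: zero_fun_def)
next
  case (Suc j)
  have A: "E (P @ [u, Gc] @ (replicate j Gc @ S)) + scaleF (- lam \<alpha> \<beta> u) (E (P @ [Gc, u] @ (replicate j Gc @ S))) \<in> GG"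
    by (rule gen2[OF rel_comm[OF u]])
  have B: "E ((P @ [Gc]) @ [u] @ replicate j Gc @ S) - scaleF (lam \<alpha> \<beta> u ^ j) (E ((P @ [Gc]) @ replicate j Gc @ [u] @ S)) \<in> GG"
    by (rule Suc)
  have l1: "P @ [u] @ replicate (Suc j) Gc @ S = P @ [u, Gc] @ (replicate j Gc @ S)"
    by (simp add: replicate_app_Cons_same)
  have l2: "P @ replicate (Suc j) Gc @ [u] @ S = (P @ [Gc]) @ replicate j Gc @ [u] @ S"
    by (simp add: replicate_app_Cons_same)
  have l3: "(P @ [Gc]) @ [u] @ replicate j Gc @ S = P @ [Gc, u] @ (replicate j Gc @ S)" by simp
  have "E (P @ [u] @ replicate (Suc j) Gc @ S) - scaleF (lam \<alpha> \<beta> u ^ Suc j) (E (P @ replicate (Suc j) Gc @ [u] @ S))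
     = (E (P @ [u, Gc] @ (replicate j Gc @ S)) + scaleF (- lam \<alpha> \<beta> u) (E (P @ [Gc, u] @ (replicate j Gc @ S))))
       + scaleF (lam \<alpha> \<beta> u) (E ((P @ [Gc]) @ [u] @ replicate j Gc @ S) - scaleF (lam \<alpha> \<beta> u ^ j) (E ((P @ [Gc]) @ replicate j Gc @ [u] @ S)))"
    unfolding l1 l2 l3 power_Suc by (rule alg1)
  also have "\<dots> \<in> GG" by (rule GG_add[OF A GG_scale[OF B]])
  finally show ?case .
qed

definition Ep :: "st \<Rightarrow> gen list \<Rightarrow> gen list \<Rightarrow> 'k" where
  "Ep q v = (if q = Dead then 0 else E (rep q @ v))"

lemma dead_GG: "rep q = x @ [g'] \<Longrightarrow> [(1,[g',g])] \<in> rels \<alpha> \<beta> \<Longrightarrow> E (rep q @ g # v) \<in> GG"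
  using gen1[of "[g',g]" x v] by simp

lemma rel_ga: "[(1,[g',Ga])] \<in> rels \<alpha> \<beta>"
  using gen_in_allgens[of g'] by (auto simp: rels_def)
lemma rel_gb: "[(1,[Gb,g])] \<in> rels \<alpha> \<beta>"
  using gen_in_allgens[of g] by (auto simp: rels_def)
lemma rel_xyz: "u \<in> {Gx,Gy,Gz} \<Longrightarrow> g \<in> {Gx,Gy,Gz} \<Longrightarrow> [(1,[u,g])] \<in> rels \<alpha> \<beta>"
  by (auto simp: rels_def)
lemma rel_b: "u \<in> {Gy,Gz} \<Longrightarrow> [(1,[Gx,Gb]), (-1,[u,Gb])] \<in> rels \<alpha> \<beta>"
  by (auto simp: rels_def)

lemma step_red:
  assumes "wfs q"
  shows "Ep q (g # v) - scaleF (wgt \<alpha> \<beta> q g) (Ep (nxt q g) v) \<in> GG"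
proof (cases q)
  case Dead
  then show ?thesis by (simp add: Ep_def GG_zero)
next
  case (C p k)
  show ?thesis
  proof (cases g)
    case Ga
    show ?thesis
    proof (cases "\<not> p \<and> k = 0")
      case True
      then show ?thesis using C Ga by (simp add: Ep_def GG_zero pre_def)
    next
      case False
      then have "rep q \<noteq> []" using C by (auto simp: pre_def)
      then obtain x g' where xg: "rep q = x @ [g']" by (metis rev_exhaust)
      have d: "E (rep q @ Ga # v) \<in> GG" by (rule dead_GG[OF xg rel_ga])
      have "nxt q g = Dead" using False C Ga by auto
      then show ?thesis using d Ga C by (simp add: Ep_def)
    qed
  next
    case Gb
    then show ?thesis using C by (simp add: Ep_def GG_zero)
  next
    case Gc
    then show ?thesis using C by (simp add: Ep_def GG_zero replicate_app_Cons_same)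
  next
    case Gx
    then show ?thesis using C by (simp add: Ep_def GG_zero)
  next
    case Gy
    then show ?thesis using C by (simp add: Ep_def GG_zero)
  next
    case Gz
    then show ?thesis using C by (simp add: Ep_def GG_zero)
  qed
next
  case (U p k u)
  with assms have u: "u \<in> {Gx, Gy, Gz}" by (cases u) auto
  define P where "P = pre p @ replicate k Gc"
  have repq: "rep q = P @ [u]" using U by (simp add: P_def)
  show ?thesis
  proof (cases g)
    case Gc
    have A: "E (P @ [u, Gc] @ v) + scaleF (- lam \<alpha> \<beta> u) (E (P @ [Gc, u] @ v)) \<in> GG"
      by (rule gen2[OF rel_comm[OF u]])
    have l1: "rep q @ g # v = P @ [u, Gc] @ v" using repq Gc by simp
    have l2: "rep (nxt q g) @ v = P @ [Gc, u] @ v" using U Gc by (simp add: P_def replicate_app_Cons_same)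
    have "Ep q (g # v) - scaleF (wgt \<alpha> \<beta> q g) (Ep (nxt q g) v)
        = E (P @ [u, Gc] @ v) - scaleF (lam \<alpha> \<beta> u) (E (P @ [Gc, u] @ v))"
    proof -
      have e1: "Ep q (g # v) = E (rep q @ g # v)" using U by (simp add: Ep_def del: rep.simps)
      have e2: "Ep (nxt q g) v = E (rep (nxt q g) @ v)" using U Gc by (simp add: Ep_def del: rep.simps)
      have e3: "wgt \<alpha> \<beta> q g = lam \<alpha> \<beta> u" using U Gc by simp
      show ?thesis unfolding e1 e2 e3 l1 l2 ..
    qed
    also have "\<dots> = E (P @ [u, Gc] @ v) + scaleF (- lam \<alpha> \<beta> u) (E (P @ [Gc, u] @ v))"
      by (rule alg2)
    finally show ?thesis using A by simp
  next
    case Gb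
    show ?thesis
    proof (cases "u = Gx")
      case True
      then show ?thesis using U Gb by (simp add: Ep_def GG_zero)
    next
      case False
      with u have u': "u \<in> {Gy, Gz}" by auto
      have A: "E (P @ [Gx, Gb] @ v) + scaleF (-1) (E (P @ [u, Gb] @ v)) \<in> GG"
        by (rule gen2[OF rel_b[OF u']])
      have "Ep q (g # v) - scaleF (wgt \<alpha> \<beta> q g) (Ep (nxt q g) v)
          = E (P @ [u, Gb] @ v) - E (P @ [Gx, Gb] @ v)"
        using U Gb repq by (simp add: Ep_def P_def)
      also have "\<dots> = - (E (P @ [Gx, Gb] @ v) + scaleF (-1) (E (P @ [u, Gb] @ v)))"
        by (rule alg3)
      finally show ?thesis using GG_neg[OF A] by simp
    qed
  next
    case Ga
    from dead_GG[OF repq rel_ga] show ?thesis using U Ga by (simp add: Ep_def)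
  next
    case Gx
    from dead_GG[OF repq rel_xyz[OF u]] show ?thesis using U Gx by (simp add: Ep_def)
  next
    case Gy
    from dead_GG[OF repq rel_xyz[OF u]] show ?thesis using U Gy by (simp add: Ep_def)
  next
    case Gz
    from dead_GG[OF repq rel_xyz[OF u]] show ?thesis using U Gz by (simp add: Ep_def)
  qed
next
  case (En p k h)
  have "rep q = (pre p @ replicate k Gc @ (if h then [Gx] else [])) @ [Gb]" using En by simp
  from dead_GG[OF this rel_gb] show ?thesis using En by (simp add: Ep_def)
qed

lemma rel_a: "[(1,[Ga,Gx]), (1,[Ga,Gy]), (-1,[Ga,Gz])] \<in> rels \<alpha> \<beta>"
  by (simp add: rels_def)

lemma zcomb: "E (Ga # replicate k Gc @ Gz # S) - scaleF (\<alpha>^k) (E (Ga # replicate k Gc @ Gx # S))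
   - scaleF (\<beta>^k) (E (Ga # replicate k Gc @ Gy # S)) \<in> GG"
proof -
  have G3: "E (Ga # Gx # replicate k Gc @ S) + E (Ga # Gy # replicate k Gc @ S)
      - E (Ga # Gz # replicate k Gc @ S) \<in> GG"
    using gen3[OF rel_a, of "[]" "replicate k Gc @ S"] by simp
  have Cx: "E (Ga # Gx # replicate k Gc @ S) - scaleF (\<alpha>^k) (E (Ga # replicate k Gc @ Gx # S)) \<in> GG"
    using comm[of Gx "[Ga]" k S] by (simp add: lam_def)
  have Cy: "E (Ga # Gy # replicate k Gc @ S) - scaleF (\<beta>^k) (E (Ga # replicate k Gc @ Gy # S)) \<in> GG"
    using comm[of Gy "[Ga]" k S] by (simp add: lam_def)
  have Cz: "E (Ga # Gz # replicate k Gc @ S) - scaleF 1 (E (Ga # replicate k Gc @ Gz # S)) \<in> GG"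
    using comm[of Gz "[Ga]" k S] by (simp add: lam_def del: scaleF_one)
  have "E (Ga # replicate k Gc @ Gz # S) - scaleF (\<alpha>^k) (E (Ga # replicate k Gc @ Gx # S))
   - scaleF (\<beta>^k) (E (Ga # replicate k Gc @ Gy # S)) =
     (E (Ga # Gx # replicate k Gc @ S) - scaleF (\<alpha>^k) (E (Ga # replicate k Gc @ Gx # S)))
   + (E (Ga # Gy # replicate k Gc @ S) - scaleF (\<beta>^k) (E (Ga # replicate k Gc @ Gy # S)))
   - (E (Ga # Gz # replicate k Gc @ S) - scaleF 1 (E (Ga # replicate k Gc @ Gz # S)))
   - (E (Ga # Gx # replicate k Gc @ S) + E (Ga # Gy # replicate k Gc @ S) - E (Ga # Gz # replicate k Gc @ S))"
    by (rule alg4)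
  also have "\<dots> \<in> GG" by (intro GG_diff GG_add Cx Cy Cz G3)
  finally show ?thesis .
qed

lemma xb_zero:
  assumes ne: "\<alpha>^k + \<beta>^k \<noteq> 1"
  shows "E (Ga # replicate k Gc @ [Gx, Gb]) \<in> GG"
proof -
  let ?X = "E (Ga # replicate k Gc @ [Gx, Gb]) :: gen list \<Rightarrow> 'k"
  let ?Y = "E (Ga # replicate k Gc @ [Gy, Gb]) :: gen list \<Rightarrow> 'k"
  let ?Z = "E (Ga # replicate k Gc @ [Gz, Gb]) :: gen list \<Rightarrow> 'k"
  have Z: "?Z - scaleF (\<alpha>^k) ?X - scaleF (\<beta>^k) ?Y \<in> GG" using zcomb[of k "[Gb]"] by simp
  have Y: "?X + scaleF (-1) ?Y \<in> GG" using gen2[OF rel_b[of Gy], of "Ga # replicate k Gc" "[]"] by simp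
  have Zb: "?X + scaleF (-1) ?Z \<in> GG" using gen2[OF rel_b[of Gz], of "Ga # replicate k Gc" "[]"] by simp
  have "scaleF (1 - \<alpha>^k - \<beta>^k) ?X = (?X + scaleF (-1) ?Z) + (?Z - scaleF (\<alpha>^k) ?X - scaleF (\<beta>^k) ?Y)
      - scaleF (\<beta>^k) (?X + scaleF (-1) ?Y)" by (rule alg5)
  also have "\<dots> \<in> GG" by (intro GG_diff GG_add GG_scale Z Y Zb)
  finally have "scaleF (inverse (1 - \<alpha>^k - \<beta>^k)) (scaleF (1 - \<alpha>^k - \<beta>^k) ?X) \<in> GG"
    by (rule GG_scale)
  moreover have "1 - \<alpha>^k - \<beta>^k \<noteq> 0" using ne by (simp add: algebra_simps)
  ultimately show ?thesis by (metis scaleF_inv)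
qed

lemma final_red: "wfs q \<Longrightarrow> Ep q [] - final \<alpha> \<beta> q \<in> GG"
proof (cases q)
  case (U p k u)
  show ?thesis
  proof (cases "p \<and> u = Gz")
    case True
    then show ?thesis using U zcomb[of k "[]"] by (simp add: Ep_def pre_def diff_diff_eq)
  qed (use U in \<open>auto simp add: Ep_def GG_zero\<close>)
next
  case (En p k h)
  show ?thesis
  proof (cases "p \<and> h \<and> \<alpha>^k + \<beta>^k \<noteq> 1")
    case True
    then show ?thesis using En xb_zero[of k] by (simp add: Ep_def pre_def)
  qed (use En in \<open>auto simp add: Ep_def GG_zero\<close>)
qed (simp_all add: Ep_def GG_zero)

lemma wtrun_snoc: "wtrun \<alpha> \<beta> q (u @ [g]) = wtrun \<alpha> \<beta> q u * wgt \<alpha> \<beta> (strun q u) g"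
  by (induct u arbitrary: q) auto

lemma red_run: "E (u @ v) - scaleF (wtrun \<alpha> \<beta> (C False 0) u) (Ep (strun (C False 0) u) v) \<in> GG"
proof (induct u arbitrary: v rule: rev_induct)
  case Nil
  then show ?case using GG_zero by (simp add: Ep_def pre_def zero_fun_def)
next
  case (snoc g u)
  let ?q = "strun (C False 0) u"
  let ?w = "wtrun \<alpha> \<beta> (C False 0) u"
  have X1: "E (u @ g # v) - scaleF ?w (Ep ?q (g # v)) \<in> GG" by (rule snoc)
  have X2: "Ep ?q (g # v) - scaleF (wgt \<alpha> \<beta> ?q g) (Ep (nxt ?q g) v) \<in> GG"
    by (rule step_red) (simp add: wfs_strun)
  have "E ((u @ [g]) @ v) - scaleF (wtrun \<alpha> \<beta> (C False 0) (u @ [g])) (Ep (strun (C False 0) (u @ [g])) v)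
     = (E (u @ g # v) - scaleF ?w (Ep ?q (g # v))) + scaleF ?w (Ep ?q (g # v) - scaleF (wgt \<alpha> \<beta> ?q g) (Ep (nxt ?q g) v))"
    unfolding wtrun_snoc strun_snoc by (simp add: alg6)
  also have "\<dots> \<in> GG" by (intro GG_add GG_scale X1 X2)
  finally show ?case .
qed

lemma ev_run: "ev \<alpha> \<beta> q w = scaleF (wtrun \<alpha> \<beta> q w) (final \<alpha> \<beta> (strun q w))"
  by (induct w arbitrary: q) (simp_all add: scaleF_def fun_eq_iff)

lemma red_main: "E w - ev \<alpha> \<beta> (C False 0) w \<in> GG"
proof -
  let ?q = "strun (C False 0) w"
  let ?w = "wtrun \<alpha> \<beta> (C False 0) w"
  have X1: "E w - scaleF ?w (Ep ?q []) \<in> GG" using red_run[of w "[]"] by simp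
  have X2: "Ep ?q [] - final \<alpha> \<beta> ?q \<in> GG" by (rule final_red) (simp add: wfs_strun)
  have "E w - ev \<alpha> \<beta> (C False 0) w = (E w - scaleF ?w (Ep ?q [])) + scaleF ?w (Ep ?q [] - final \<alpha> \<beta> ?q)"
    unfolding ev_run by (rule alg7)
  also have "\<dots> \<in> GG" by (intro GG_add GG_scale X1 X2)
  finally show ?thesis .
qed

lemma proj_GG:
  assumes f: "f \<in> GG" and z: "\<And>t. length t \<noteq> m \<Longrightarrow> f t = 0"
  shows "f \<in> V.span (idealgens \<alpha> \<beta> m)"
proof -
  define pr :: "(gen list \<Rightarrow> 'k) \<Rightarrow> (gen list \<Rightarrow> 'k)" where "pr f = (\<lambda>t. if length t = m then f t else 0)" for f
  let ?T = "{f. pr f \<in> V.span (idealgens \<alpha> \<beta> m)}"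
  have "V.span (\<Union>n. idealgens \<alpha> \<beta> n) \<subseteq> ?T"
  proof (rule V.span_minimal)
    show "(\<Union>n. idealgens \<alpha> \<beta> n) \<subseteq> ?T"
    proof
      fix g assume "g \<in> (\<Union>n. idealgens \<alpha> \<beta> n)"
      then obtain n where g: "g \<in> idealgens \<alpha> \<beta> n" by blast
      show "g \<in> ?T"
      proof (cases "n = m")
        case True
        have "pr g = g" using supp_gen[OF g] True by (auto simp: pr_def fun_eq_iff)
        then show ?thesis using g True by (simp add: V.span_base)
      next
        case False
        have "pr g = 0" using supp_gen[OF g] False by (auto simp: pr_def fun_eq_iff)
        then show ?thesis by (simp add: V.span_zero)
      qed
    qed
    show "V.subspace ?T"
    proof (rule V.subspaceI)
      have "pr 0 = 0" by (simp add: pr_def fun_eq_iff)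
      then show "0 \<in> ?T" by (simp add: V.span_zero)
    next
      fix x y assume "x \<in> ?T" "y \<in> ?T"
      moreover have "pr (x + y) = pr x + pr y" by (simp add: pr_def fun_eq_iff)
      ultimately show "x + y \<in> ?T" by (simp add: V.span_add)
    next
      fix c x assume "x \<in> ?T"
      moreover have "pr (scaleF c x) = scaleF c (pr x)" by (simp add: pr_def fun_eq_iff)
      ultimately show "scaleF c x \<in> ?T" by (simp add: V.span_scale)
    qed
  qed
  then have "pr f \<in> V.span (idealgens \<alpha> \<beta> m)" using f by (auto simp: GG_def)
  moreover have "pr f = f" using z by (auto simp: pr_def fun_eq_iff)
  ultimately show ?thesis by simp
qed

definition NW :: "nat \<Rightarrow> gen list set" where
  "NW n = {rep (C False (n+3)), rep (C True (n+2)), rep (U False (n+2) Gx), rep (U False (n+2) Gy),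
     rep (U False (n+2) Gz), rep (U True (n+1) Gx), rep (U True (n+1) Gy), rep (En False (n+2) False),
     rep (En False (n+1) True), rep (En True (n+1) False)}
   \<union> (if \<alpha>^n + \<beta>^n = 1 then {rep (En True n True)} else {})"

lemma final_supp:
  assumes "wfs q" "length (rep q) = n + 3" "final \<alpha> \<beta> q t \<noteq> 0"
  shows "t \<in> NW n"
proof (cases q)
  case (C p k)
  then show ?thesis using assms by (cases p) (auto simp: NW_def pre_def E_def split: if_splits)
next
  case (U p k u)
  then have u: "u = Gx \<or> u = Gy \<or> u = Gz" using assms(1) by (cases u) auto
  show ?thesis
  proof (cases p)
    case True
    then have k: "k = n + 1" using U assms(2) by (simp add: pre_def)
    show ?thesis using U True k assms(3) u by (auto simp: NW_def pre_def E_def split: if_splits)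
  next
    case False
    then have k: "k = n + 2" using U assms(2) by (simp add: pre_def)
    show ?thesis using U False k assms(3) u by (auto simp: NW_def pre_def E_def split: if_splits)
  qed
next
  case (En p k h)
  then show ?thesis using assms by (cases p; cases h) (auto simp: NW_def pre_def E_def split: if_splits)
next
  case Dead
  then show ?thesis using assms by simp
qed

lemma nf_supp:
  assumes "length w = n + 3" "ev \<alpha> \<beta> (C False 0) w t \<noteq> 0"
  shows "t \<in> NW n"
proof -
  let ?q = "strun (C False 0) w"
  have f: "final \<alpha> \<beta> ?q t \<noteq> 0" using assms(2) by (simp add: ev_run)
  then have "?q \<noteq> Dead" by auto
  then have "length (rep ?q) = n + 3" using len_rep_strun[of "C False 0" w] assms(1) by (simp add: pre_def)
  moreover have "wfs ?q" by (rule wfs_strun) simp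
  ultimately show ?thesis using final_supp f by blast
qed

lemma NW_len: "t \<in> NW n \<Longrightarrow> length t = n + 3"
  by (auto simp: NW_def pre_def split: if_splits)

lemma ev_C_rep: "ev \<alpha> \<beta> (C p k) (replicate j Gc @ w) = ev \<alpha> \<beta> (C p (k + j)) w"
  by (induct j arbitrary: k) auto

lemma ev_C_rep': "ev \<alpha> \<beta> (C p k) (replicate j Gc) = ev \<alpha> \<beta> (C p (k + j)) []"
  using ev_C_rep[of p k j "[]"] by simp

lemma nfN: "t \<in> NW n \<Longrightarrow> ev \<alpha> \<beta> (C False 0) t = E t"
  by (auto simp: NW_def pre_def ev_C_rep ev_C_rep' split: if_splits)

definition NL :: "nat \<Rightarrow> gen list list" where
  "NL n = [rep (C False (n+3)), rep (C True (n+2)), rep (U False (n+2) Gx), rep (U False (n+2) Gy),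
     rep (U False (n+2) Gz), rep (U True (n+1) Gx), rep (U True (n+1) Gy), rep (En False (n+2) False),
     rep (En False (n+1) True), rep (En True (n+1) False)]
   @ (if \<alpha>^n + \<beta>^n = 1 then [rep (En True n True)] else [])"

lemma NW_NL: "NW n = set (NL n)"
  by (auto simp: NW_def NL_def)

lemma butlast2[simp]: "butlast (xs @ [a, b]) = xs @ [a]"
  by (induct xs) auto

lemma card_NW: "card (NW n) = (if \<alpha>^n + \<beta>^n = 1 then 11 else 10)"
proof -
  define f where "f t = (hd t, last (butlast t), last t)" for t :: "gen list"
  have d: "distinct (map f (NL n))"
    by (simp add: NL_def f_def pre_def replicate_append_same[symmetric] del: replicate_Suc)
  have l: "length (NL n) = (if \<alpha>^n + \<beta>^n = 1 then 11 else 10)" by (simp add: NL_def)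
  have "card (NW n) \<le> length (NL n)" unfolding NW_NL by (rule card_length)
  moreover have "card (f ` NW n) \<le> card (NW n)" unfolding NW_NL by (rule card_image_le) simp
  moreover have "card (f ` NW n) = length (NL n)"
    unfolding NW_NL using distinct_card[OF d] by simp
  ultimately show ?thesis using l by linarith
qed

lemma hA_main: "hA \<alpha> \<beta> (n + 3) = (if \<alpha>^n + \<beta>^n = 1 then 11 else 10)"
proof -
  let ?W = "{w::gen list. length w = n + 3}"
  have "V.dim (idealgens \<alpha> \<beta> (n + 3)) = card ?W - card (NW n)"
  proof (rule dim_main[where nf = "ev \<alpha> \<beta> (C False 0)"])
    show "finite ?W" by (rule finite_W)
    show "NW n \<subseteq> ?W" using NW_len by blast
    show "g t = 0" if "g \<in> idealgens \<alpha> \<beta> (n + 3)" "t \<notin> ?W" for g t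
      using supp_gen that by auto
    show "(\<Sum>w\<in>?W. scaleF (g w) (ev \<alpha> \<beta> (C False 0) w)) = 0" if "g \<in> idealgens \<alpha> \<beta> (n + 3)" for g
      by (rule kill_gen[OF that])
    show "E w - ev \<alpha> \<beta> (C False 0) w \<in> V.span (idealgens \<alpha> \<beta> (n + 3))" if "w \<in> ?W" for w
    proof (rule proj_GG[OF red_main])
      fix t :: "gen list" assume t: "length t \<noteq> n + 3"
      then have "t \<noteq> w" using that by auto
      moreover have "ev \<alpha> \<beta> (C False 0) w t = 0" using nf_supp[of w n t] NW_len[of t n] t that by auto
      ultimately show "(E w - ev \<alpha> \<beta> (C False 0) w) t = 0" by (simp add: E_def)
    qed
    show "ev \<alpha> \<beta> (C False 0) t = E t" if "t \<in> NW n" for t using nfN that by blast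
    show "ev \<alpha> \<beta> (C False 0) w t = 0" if "w \<in> ?W" "t \<notin> NW n" for w t
      using nf_supp[of w n t] that by auto
  qed
  then have "V.dim (idealgens \<alpha> \<beta> (n + 3)) = 6 ^ (n + 3) - card (NW n)" by (simp add: card_W)
  moreover have "card (NW n) \<le> 6 ^ (n + 3)"
  proof -
    have "card (NW n) \<le> 11" by (simp add: card_NW)
    also have "(11::nat) \<le> 6 ^ 3" by simp
    also have "(6::nat) ^ 3 \<le> 6 ^ (n + 3)" by (rule power_increasing) auto
    finally show ?thesis .
  qed
  ultimately show ?thesis by (simp add: hA_def card_NW)
qed

end

theorem proposition5p3:
  fixes \<alpha> \<beta> :: "'k::field"
  assumes "\<alpha> \<noteq> 0" and "\<beta> \<noteq> 0"
  shows "(\<forall>n::nat. hA \<alpha> \<beta> (n + 3) = (if \<alpha> ^ n + \<beta> ^ n = 1 then 11 else 10))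
    \<and> ((\<forall>n::nat\<ge>3. \<forall>a b :: 'k. a \<noteq> 0 \<longrightarrow> b \<noteq> 0 \<longrightarrow> a ^ n + b ^ n \<noteq> 1)
       \<longleftrightarrow> (\<forall>a b :: 'k. a \<noteq> 0 \<longrightarrow> b \<noteq> 0 \<longrightarrow> (\<forall>i\<ge>6. hA a b i = 10)))"
proof -
  have A: "\<forall>n::nat. hA \<alpha> \<beta> (n + 3) = (if \<alpha> ^ n + \<beta> ^ n = 1 then 11 else 10)"
    using hA_main by blast
  have B: "(\<forall>a b :: 'k. a \<noteq> 0 \<longrightarrow> b \<noteq> 0 \<longrightarrow> (\<forall>i\<ge>6. hA a b i = 10))"
    if H: "\<forall>n::nat\<ge>3. \<forall>a b :: 'k. a \<noteq> 0 \<longrightarrow> b \<noteq> 0 \<longrightarrow> a ^ n + b ^ n \<noteq> 1"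
  proof (intro allI impI)
    fix a b :: 'k and i :: nat
    assume a: "a \<noteq> 0" and b: "b \<noteq> 0" and i: "6 \<le> i"
    then have "i = (i - 3) + 3" by simp
    moreover have "a ^ (i - 3) + b ^ (i - 3) \<noteq> 1" using H a b i by auto
    ultimately show "hA a b i = 10" using hA_main[of a b "i - 3"] by simp
  qed
  have C: "\<forall>n::nat\<ge>3. \<forall>a b :: 'k. a \<noteq> 0 \<longrightarrow> b \<noteq> 0 \<longrightarrow> a ^ n + b ^ n \<noteq> 1"
    if H: "\<forall>a b :: 'k. a \<noteq> 0 \<longrightarrow> b \<noteq> 0 \<longrightarrow> (\<forall>i\<ge>6. hA a b i = 10)"
  proof (intro allI impI)
    fix n :: nat and a b :: 'k
    assume n: "3 \<le> n" and a: "a \<noteq> 0" and b: "b \<noteq> 0"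
    have "hA a b (n + 3) = 10" using H a b n by auto
    then show "a ^ n + b ^ n \<noteq> 1" using hA_main[of a b n] by (auto split: if_splits)
  qed
  show ?thesis using A B C by blast
qed

end
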